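(* Let $\boldsymbol{\mathcal{G}}=(\mathcal{V},\boldsymbol{\mathcal{E}},\mu(\cdot))$ be a stochastic digraph with vertex set $\mathbb{Z}_n$, edge sets $\mathcal{E}_1,\dots,\mathcal{E}_h$, and out-neighborhood map $H(x,w)=\{y:(x,y)\in\mathcal{E}_w\}$, such that there is no pair $(i,w)\in\mathbb{Z}_n\times\mathbb{Z}_h$ with $\mu(\{w\})>0$ and $H(i,w)=\emptyset$. Let $\mathcal{Q}\subset\mathbb{Z}_n$ and let $\check{\boldsymbol{\mathcal{G}}}$ be the augmented stochastic digraph on $\mathbb{Z}_{n+2}$ (with the same $\mu$) obtained by replacing, in each $\mathcal{E}_s$, every edge $(i,j)$ with $j\in\mathcal{Q}$ by the edge $(i,n+1)$, and adding the edges $(n+1,n+2)$ and $(n+2,n+2)$ to each $\mathcal{E}_s$. Let $\check H$ be its out-neighborhood map and consider the Markov decision process on states $\mathbb{Z}_{n+2}$ with action space $\mathcal{A}(i)$ at state $i$ equal to the set of tuples $a=(\xi_{1,a},\dots,\xi_{h,a})$ with $\xi_{w,a}\in\check H(i,w)$ for each $w$, transition probabilities $$\check p(j\mid i,a)=\sum_{w\in\{s\in\mathbb{Z}_h:\,\xi_{s,a}=j\}}\mu(\{w\}),$$ and reward $r(i,a,j)=\mathbb{I}_{\{n+1\}}(j)$. Let $v_\star$ be the optimal state-value function of this MDP, i.e., $v_\star(0,x)=0$ and $v_\star(k,x)=\max_{a\in\mathcal{A}(x)}\sum_{j}\check p(j\mid x,a)\big(r(x,a,j)+v_\star(k-1,j)\big)$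 for $k\geqslant1$. Then for all $k\in\mathbb{Z}_{\geqslant0}$ and all $x\in\mathbb{Z}_n$, $$\mathfrak{R}_{\mathcal{Q}}(k,x)=v_\star(k,x),$$ where $\mathfrak{R}_{\mathcal{Q}}(k,x):=\sup_{\boldsymbol{x}\in\mathcal{S}(x)}\mathbb{P}\big(\exists\,t\in\{1,\dots,k\}:\boldsymbol{x}_t\in\mathcal{Q}\big)$ is the weak reachability probability.
   Context: A stochastic digraph is a triple $(\mathbb{Z}_n,\{\mathcal{E}_s\}_{s=1}^h,\mu)$ with $\mathcal{E}_s\subset\mathbb{Z}_n\times\mathbb{Z}_n$ and $\mu$ the common distribution of an i.i.d. sequence $\boldsymbol{w}_k:\Omega\to\mathbb{Z}_h$, $k\in\mathbb{Z}_{\geqslant0}$, on a probability space $(\Omega,\mathcal{F},\mathbb{P})$. A stochastic directed path from $x$ is a map $\omega\mapsto\{\boldsymbol{x}_k(\omega)\}_{k=0}^{\boldsymbol{K}(\omega)}$ with $\boldsymbol{x}_0=x$, $\boldsymbol{x}_{k+1}(\omega)\in H(\boldsymbol{x}_k(\omega),\boldsymbol{w}_k(\omega))$ for all $\omega$ and $k<\boldsymbol{K}(\omega)$, and with $\boldsymbol{x}_{k+1}$ measurable with respect to $\sigma(\boldsymbol{w}_0,\dots,\boldsymbol{w}_k)$ for each $k$. It is maximal if it cannot be extended; $\mathcal{S}(x)$ is the set of maximal stochastic directed paths from $x$. $\mathbb{I}_{A}$ denotes the indicator function of the set $A$. *)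

theory Defs
  imports "HOL-Probability.Probability"
begin

text \<open>Conventions: Z_n = {1..n}, Z_h = {1..h}; edge sets E s for s in {1..h}.\<close>

definition out_nbhd :: "(nat \<Rightarrow> (nat \<times> nat) set) \<Rightarrow> nat \<Rightarrow> nat \<Rightarrow> nat set" where
  "out_nbhd E x s = {y. (x, y) \<in> E s}"

definition aug_edges :: "nat \<Rightarrow> nat set \<Rightarrow> (nat \<Rightarrow> (nat \<times> nat) set) \<Rightarrow> nat \<Rightarrow> (nat \<times> nat) set" where
  "aug_edges n Q E s =
     {(i, j) | i j. (i, j) \<in> E s \<and> j \<notin> Q} \<union> {(i, n + 1) | i j. (i, j) \<in> E s \<and> j \<in> Q}
     \<union> {(n + 1, n + 2), (n + 2, n + 2)}"

text \<open>Action set: tuples (xi_1,...,xi_h), represented as lists of length h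
  (xi_w = a ! (w - 1)) with xi_w in the augmented out-neighbourhood.  When that
  neighbourhood is empty (only possible if mu w = 0) the component is unconstrained
  within the state space.\<close>
definition mdp_actions :: "nat \<Rightarrow> nat \<Rightarrow> nat set \<Rightarrow> (nat \<Rightarrow> (nat \<times> nat) set) \<Rightarrow> nat \<Rightarrow> nat list set" where
  "mdp_actions n h Q E i =
     {a. length a = h \<and>
         (\<forall>w\<in>{1..h}. a ! (w - 1) \<in>
            (if out_nbhd (aug_edges n Q E) i w = {} then {1..n+2}
             else out_nbhd (aug_edges n Q E) i w))}"

definition mdp_trans :: "nat \<Rightarrow> (nat \<Rightarrow> real) \<Rightarrow> nat \<Rightarrow> nat list \<Rightarrow> real" where
  "mdp_trans h mu j a = (\<Sum>w\<in>{s\<in>{1..h}. a ! (s - 1) = j}. mu w)"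

definition mdp_reward :: "nat \<Rightarrow> nat \<Rightarrow> real" where
  "mdp_reward n j = indicator {n + 1} j"

fun v_star :: "nat \<Rightarrow> nat \<Rightarrow> nat set \<Rightarrow> (nat \<Rightarrow> (nat \<times> nat) set) \<Rightarrow> (nat \<Rightarrow> real) \<Rightarrow> nat \<Rightarrow> nat \<Rightarrow> real" where
  "v_star n h Q E mu 0 x = 0"
| "v_star n h Q E mu (Suc k) x =
     Max ((\<lambda>a. \<Sum>j\<in>{1..n+2}. mdp_trans h mu j a * (mdp_reward n j + v_star n h Q E mu k j))
          ` mdp_actions n h Q E x)"

text \<open>Stochastic directed path from x0: X k is the k-th vertex, K the (random) length.
  X (Suc k) is measurable w.r.t. sigma(w_0,...,w_k).\<close>
definition stoch_path ::
  "'a measure \<Rightarrow> (nat \<Rightarrow> 'a \<Rightarrow> nat) \<Rightarrow> (nat \<Rightarrow> nat \<Rightarrow> nat set) \<Rightarrow> nat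
   \<Rightarrow> (nat \<Rightarrow> 'a \<Rightarrow> nat) \<Rightarrow> ('a \<Rightarrow> enat) \<Rightarrow> bool" where
  "stoch_path M w H x0 X K \<longleftrightarrow>
     (\<forall>\<omega>\<in>space M. X 0 \<omega> = x0) \<and>
     (\<forall>\<omega>\<in>space M. \<forall>k. enat k < K \<omega> \<longrightarrow> X (Suc k) \<omega> \<in> H (X k \<omega>) (w k \<omega>)) \<and>
     (\<forall>k. X (Suc k) \<in> measurable
           (vimage_algebra (space M) (\<lambda>\<omega>. map (\<lambda>i. w i \<omega>) [0..<Suc k]) (count_space UNIV))
           (count_space UNIV))"

definition maximal_path ::
  "'a measure \<Rightarrow> (nat \<Rightarrow> 'a \<Rightarrow> nat) \<Rightarrow> (nat \<Rightarrow> nat \<Rightarrow> nat set)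
   \<Rightarrow> (nat \<Rightarrow> 'a \<Rightarrow> nat) \<Rightarrow> ('a \<Rightarrow> enat) \<Rightarrow> bool" where
  "maximal_path M w H X K \<longleftrightarrow>
     (\<forall>\<omega>\<in>space M. \<forall>k. K \<omega> = enat k \<longrightarrow> H (X k \<omega>) (w k \<omega>) = {})"

definition weak_reach ::
  "'a measure \<Rightarrow> (nat \<Rightarrow> 'a \<Rightarrow> nat) \<Rightarrow> (nat \<Rightarrow> nat \<Rightarrow> nat set) \<Rightarrow> nat set \<Rightarrow> nat \<Rightarrow> nat \<Rightarrow> real" where
  "weak_reach M w H Q k x0 =
     Sup {measure M {\<omega>\<in>space M. \<exists>t\<in>{1..k}. enat t \<le> K \<omega> \<and> X t \<omega> \<in> Q} | X K.
            stoch_path M w H x0 X K \<and> maximal_path M w H X K}"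

end

theory Submission
  imports Defs
begin

definition wsq :: "(nat \<Rightarrow> 'a \<Rightarrow> nat) \<Rightarrow> nat \<Rightarrow> 'a \<Rightarrow> nat list" where
  "wsq w k \<omega> = map (\<lambda>i. w i \<omega>) [0..<k]"

definition Ls :: "nat \<Rightarrow> nat \<Rightarrow> nat list set" where
  "Ls h k = {ss. set ss \<subseteq> {1..h} \<and> length ss = k}"

definition pp :: "(nat \<Rightarrow> real) \<Rightarrow> nat list \<Rightarrow> real" where
  "pp mu ss = prod_list (map mu ss)"

lemma wsq_Suc: "wsq w (Suc k) \<omega> = wsq w k \<omega> @ [w k \<omega>]"
  by (simp add: wsq_def)

lemma wsq_take: "t \<le> k \<Longrightarrow> take t (wsq w k \<omega>) = wsq w t \<omega>"
  by (simp add: wsq_def take_map)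

lemma length_wsq[simp]: "length (wsq w k \<omega>) = k"
  by (simp add: wsq_def)

lemma nth_wsq: "i < k \<Longrightarrow> wsq w k \<omega> ! i = w i \<omega>"
  by (simp add: wsq_def)

lemma finite_Ls: "finite (Ls h k)"
  unfolding Ls_def by (rule finite_lists_length_eq) simp

lemma Ls_Suc: "Ls h (Suc k) = (\<lambda>(s, ss). s # ss) ` ({1..h} \<times> Ls h k)"
  unfolding Ls_def
  by (auto simp: length_Suc_conv image_iff)

lemma sum_Ls_Suc: "(\<Sum>ss\<in>Ls h (Suc k). f ss) = (\<Sum>s\<in>{1..h}. \<Sum>ss\<in>Ls h k. f (s # ss))"
proof -
  have inj: "inj_on (\<lambda>(s, ss). s # ss) ({1..h} \<times> Ls h k)"
    by (auto simp: inj_on_def)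
  have "(\<Sum>ss\<in>Ls h (Suc k). f ss) = (\<Sum>p\<in>{1..h} \<times> Ls h k. f (fst p # snd p))"
    unfolding Ls_Suc by (subst sum.reindex[OF inj]) (simp add: case_prod_beta)
  also have "\<dots> = (\<Sum>s\<in>{1..h}. \<Sum>ss\<in>Ls h k. f (s # ss))"
    by (simp add: sum.cartesian_product case_prod_beta)
  finally show ?thesis .
qed

lemma pp_Cons[simp]: "pp mu (s # ss) = mu s * pp mu ss" and pp_Nil[simp]: "pp mu [] = 1"
  by (simp_all add: pp_def)


primrec Gf :: "(nat \<Rightarrow> nat \<Rightarrow> nat \<Rightarrow> nat) \<Rightarrow> nat \<Rightarrow> nat \<Rightarrow> nat list \<Rightarrow> nat" where
  "Gf P r y [] = y"
| "Gf P r y (s # l) = Gf P (r - 1) (P r y s) l"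

lemma Gf_snoc: "Gf P r y (l @ [s]) = P (r - length l) (Gf P r y l) s"
proof (induction l arbitrary: r y)
  case Nil
  then show ?case by simp
next
  case (Cons a l)
  have "Gf P r y ((a # l) @ [s]) = Gf P (r - 1) (P r y a) (l @ [s])" by simp
  also have "\<dots> = P (r - 1 - length l) (Gf P (r - 1) (P r y a) l) s" by (rule Cons.IH)
  also have "r - 1 - length l = r - length (a # l)" by simp
  finally show ?case by simp
qed

definition hitG :: "nat set \<Rightarrow> (nat list \<Rightarrow> nat) \<Rightarrow> nat \<Rightarrow> nat list \<Rightarrow> bool" where
  "hitG Q G k ss = (\<exists>t\<in>{1..k}. G (take t ss) \<in> Q)"

lemma hitG_0[simp]: "\<not> hitG Q G 0 ss"
  by (simp add: hitG_def)

lemma hitG_Cons: "hitG Q G (Suc k) (s # ss) \<longleftrightarrow> G [s] \<in> Q \<or> hitG Q (\<lambda>l. G (s # l)) k ss"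
proof
  assume "hitG Q G (Suc k) (s # ss)"
  then obtain t where t: "t \<in> {1..Suc k}" "G (take t (s # ss)) \<in> Q" by (auto simp: hitG_def)
  show "G [s] \<in> Q \<or> hitG Q (\<lambda>l. G (s # l)) k ss"
  proof (cases "t = 1")
    case True
    then show ?thesis using t by simp
  next
    case False
    then obtain t' where "t = Suc t'" "t' \<in> {1..k}" using t(1) by (cases t) auto
    then show ?thesis using t(2) by (auto simp: hitG_def)
  qed
next
  assume "G [s] \<in> Q \<or> hitG Q (\<lambda>l. G (s # l)) k ss"
  then show "hitG Q G (Suc k) (s # ss)"
  proof
    assume "G [s] \<in> Q"
    then show ?thesis unfolding hitG_def by (intro bexI[of _ 1]) auto
  next
    assume "hitG Q (\<lambda>l. G (s # l)) k ss"
    then obtain t where "t \<in> {1..k}" "G (s # take t ss) \<in> Q" by (auto simp: hitG_def)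
    then show ?thesis unfolding hitG_def by (intro bexI[of _ "Suc t"]) auto
  qed
qed


lemma enat_le_LeastK: "(enat t \<le> (if \<exists>t. P t then enat (LEAST t. P t) else \<infinity>)) \<longleftrightarrow> (\<forall>t'<t. \<not> P t')"
proof (cases "\<exists>t. P t")
  case True
  have "t \<le> (LEAST t. P t) \<longleftrightarrow> (\<forall>t'<t. \<not> P t')"
  proof
    assume a: "t \<le> (LEAST t. P t)"
    show "\<forall>t'<t. \<not> P t'"
    proof (intro allI impI)
      fix t' assume "t' < t"
      then have "t' < (LEAST t. P t)" using a by (rule less_le_trans)
      then show "\<not> P t'" by (rule not_less_Least)
    qed
  next
    assume a: "\<forall>t'<t. \<not> P t'"
    show "t \<le> (LEAST t. P t)"
    proof (rule ccontr)
      assume "\<not> t \<le> (LEAST t. P t)"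
      then have "(LEAST t. P t) < t" by simp
      moreover have "P (LEAST t. P t)" using True by (rule LeastI_ex)
      ultimately show False using a by blast
    qed
  qed
  moreover have "(enat t \<le> (if \<exists>t. P t then enat (LEAST t. P t) else \<infinity>)) = (t \<le> (LEAST t. P t))"
    using True by simp
  ultimately show ?thesis by simp
next
  case False
  then show ?thesis by simp
qed

locale sdg = prob_space M
  for M :: "'a measure" +
  fixes w :: "nat \<Rightarrow> 'a \<Rightarrow> nat" and mu :: "nat \<Rightarrow> real"
    and n h :: nat and E :: "nat \<Rightarrow> (nat \<times> nat) set" and Q :: "nat set"
  assumes wm: "\<forall>i. w i \<in> measurable M (count_space UNIV)"
    and wr: "\<forall>i. \<forall>\<omega>\<in>space M. w i \<omega> \<in> {1..h}"
    and wi: "indep_vars (\<lambda>_. count_space UNIV) w UNIV"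
    and wmu: "\<forall>i. \<forall>s\<in>{1..h}. measure M {\<omega>\<in>space M. w i \<omega> = s} = mu s"
    and Esub: "\<forall>s\<in>{1..h}. E s \<subseteq> {1..n} \<times> {1..n}"
    and Ene: "\<not> (\<exists>i\<in>{1..n}. \<exists>s\<in>{1..h}. mu s > 0 \<and> out_nbhd E i s = {})"
    and Qsub: "Q \<subseteq> {1..n}"
begin

lemma mu_nonneg: "s \<in> {1..h} \<Longrightarrow> mu s \<ge> 0"
  using wmu by (metis measure_nonneg)

lemma Ls_mem: "ss \<in> Ls h k \<Longrightarrow> s \<in> set ss \<Longrightarrow> s \<in> {1..h}"
  unfolding Ls_def by blast

lemma pp_nonneg: "ss \<in> Ls h k \<Longrightarrow> pp mu ss \<ge> 0"
  unfolding pp_def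
proof (rule prod_list_nonneg)
  fix y assume a: "ss \<in> Ls h k" "y \<in> set (map mu ss)"
  then obtain s where s: "s \<in> set ss" "y = mu s" by auto
  show "0 \<le> y" using mu_nonneg[OF Ls_mem[OF a(1) s(1)]] s(2) by simp
qed

lemma pp_pos: "ss \<in> Ls h k \<Longrightarrow> pp mu ss \<noteq> 0 \<Longrightarrow> s \<in> set ss \<Longrightarrow> mu s > 0"
proof -
  assume a: "ss \<in> Ls h k" "pp mu ss \<noteq> 0" "s \<in> set ss"
  then have "mu s \<noteq> 0" unfolding pp_def using prod_list_zero_iff by fastforce
  with mu_nonneg[OF Ls_mem[OF a(1) a(3)]] show ?thesis by simp
qed

lemma wsq_Ls: "\<omega> \<in> space M \<Longrightarrow> wsq w k \<omega> \<in> Ls h k"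
  using wr by (auto simp: Ls_def wsq_def)

lemma ev_w_sets: "{\<omega>\<in>space M. w i \<omega> = s} \<in> sets M"
proof -
  have "w i -` {s} \<inter> space M \<in> sets M" using wm by (auto intro: measurable_sets)
  moreover have "w i -` {s} \<inter> space M = {\<omega>\<in>space M. w i \<omega> = s}" by auto
  ultimately show ?thesis by simp
qed

lemma prob_single:
  assumes "ss \<in> Ls h k"
  shows "{\<omega>\<in>space M. wsq w k \<omega> = ss} \<in> sets M \<and> prob {\<omega>\<in>space M. wsq w k \<omega> = ss} = pp mu ss"
proof (cases "k = 0")
  case True
  then have "ss = []" using assms by (simp add: Ls_def)
  then show ?thesis using True by (simp add: wsq_def prob_space)
next
  case False
  define A where "A i = {\<omega>\<in>space M. w i \<omega> = ss ! i}" for i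
  have eq: "{\<omega>\<in>space M. wsq w k \<omega> = ss} = (\<Inter>i\<in>{..<k}. A i)"
    using assms False by (auto simp: A_def wsq_def Ls_def list_eq_iff_nth_eq)
  have ind: "indep_sets (\<lambda>i. sigma_sets (space M) {w i -` B \<inter> space M |B. B \<in> sets (count_space UNIV)}) UNIV"
    using wi unfolding indep_vars_def by blast
  have "A i \<in> sigma_sets (space M) {w i -` B \<inter> space M |B. B \<in> sets (count_space UNIV)}" for i
    by (rule sigma_sets.Basic) (auto simp: A_def intro!: exI[of _ "{ss ! i}"])
  then have "prob (\<Inter>i\<in>{..<k}. A i) = (\<Prod>i\<in>{..<k}. prob (A i))"
    using False by (intro indep_setsD[OF ind]) auto
  also have "\<dots> = (\<Prod>i\<in>{..<k}. mu (ss ! i))"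
  proof (rule prod.cong)
    fix i assume "i \<in> {..<k}"
    then have "ss ! i \<in> {1..h}" using assms by (intro Ls_mem[OF assms]) (auto simp: Ls_def)
    then show "prob (A i) = mu (ss ! i)" using wmu by (simp add: A_def)
  qed simp
  also have "\<dots> = pp mu ss"
    using assms by (simp add: pp_def prod.list_conv_set_nth Ls_def atLeast0LessThan)
  moreover have "(\<Inter>i\<in>{..<k}. A i) \<in> sets M"
    using False by (intro sets.finite_INT) (auto simp: A_def ev_w_sets)
  ultimately show ?thesis using eq by simp
qed

lemma prob_set:
  "{\<omega>\<in>space M. wsq w k \<omega> \<in> B} \<in> sets M \<and>
   prob {\<omega>\<in>space M. wsq w k \<omega> \<in> B} = (\<Sum>ss\<in>Ls h k. if ss \<in> B then pp mu ss else 0)"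
proof -
  define S where "S = {ss\<in>Ls h k. ss \<in> B}"
  define A where "A ss = {\<omega>\<in>space M. wsq w k \<omega> = ss}" for ss
  have fS: "finite S" using finite_Ls by (simp add: S_def)
  have eq: "{\<omega>\<in>space M. wsq w k \<omega> \<in> B} = (\<Union>ss\<in>S. A ss)"
    using wsq_Ls by (auto simp: S_def A_def)
  have As: "A ` S \<subseteq> sets M" using prob_single by (auto simp: A_def S_def)
  have dj: "disjoint_family_on A S" by (auto simp: disjoint_family_on_def A_def)
  have "prob (\<Union>ss\<in>S. A ss) = (\<Sum>ss\<in>S. prob (A ss))"
    by (rule finite_measure_finite_Union[OF fS As dj])
  also have "\<dots> = (\<Sum>ss\<in>S. pp mu ss)"
    by (rule sum.cong) (auto simp: S_def A_def prob_single)
  also have "\<dots> = (\<Sum>ss\<in>Ls h k. if ss \<in> B then pp mu ss else 0)"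
    unfolding S_def by (rule sum.inter_filter[OF finite_Ls])
  finally show ?thesis using eq As fS by (auto intro!: sets.finite_UN)
qed

lemma sum_pp: "(\<Sum>ss\<in>Ls h k. pp mu ss) = 1"
proof -
  have "{\<omega>\<in>space M. wsq w k \<omega> \<in> UNIV} = space M" by auto
  then show ?thesis using prob_set[of k UNIV] prob_space by simp
qed

lemma factor:
  assumes sp: "stoch_path M w H x0 X K"
  defines "G \<equiv> \<lambda>l. if l = [] then x0 else X (length l) (SOME \<omega>. \<omega> \<in> space M \<and> wsq w (length l) \<omega> = l)"
  shows "\<omega> \<in> space M \<Longrightarrow> X t \<omega> = G (wsq w t \<omega>)"
proof (cases t)
  case 0
  assume "\<omega> \<in> space M"
  then show ?thesis using sp 0 by (simp add: stoch_path_def G_def wsq_def)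
next
  case (Suc t')
  assume om: "\<omega> \<in> space M"
  define g where "g = wsq w t"
  have gw: "g = (\<lambda>\<omega>. map (\<lambda>i. w i \<omega>) [0..<Suc t'])" by (simp add: g_def wsq_def Suc fun_eq_iff)
  define \<omega>' where "\<omega>' = (SOME \<omega>'. \<omega>' \<in> space M \<and> g \<omega>' = g \<omega>)"
  have o': "\<omega>' \<in> space M \<and> g \<omega>' = g \<omega>" unfolding \<omega>'_def by (rule someI[of _ \<omega>]) (simp add: om)
  have meas: "X t \<in> measurable (vimage_algebra (space M) g (count_space UNIV)) (count_space UNIV)"
    using sp unfolding stoch_path_def gw Suc by blast
  have "X t -` {X t \<omega>} \<inter> space (vimage_algebra (space M) g (count_space UNIV)) \<in> sets (vimage_algebra (space M) g (count_space UNIV))"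
    by (rule measurable_sets[OF meas]) simp
  then have "X t -` {X t \<omega>} \<inter> space M \<in> {g -` A \<inter> space M |A. A \<in> sets (count_space UNIV)}"
    by (subst (asm) sets_vimage_algebra2) auto
  then obtain A where A: "X t -` {X t \<omega>} \<inter> space M = g -` A \<inter> space M" by auto
  have "\<omega> \<in> g -` A" using A om by blast
  then have "\<omega>' \<in> g -` A \<inter> space M" using o' by auto
  then have "X t \<omega>' = X t \<omega>" using A by blast
  moreover have "G (wsq w t \<omega>) = X t \<omega>'"
    unfolding G_def \<omega>'_def g_def using Suc by (simp add: wsq_def)
  ultimately show ?thesis by simp
qed

abbreviation "Sp \<equiv> {s\<in>{1..h}. mu s > 0}"

lemma nbhd_sub: "s \<in> {1..h} \<Longrightarrow> out_nbhd E y s \<subseteq> {1..n}"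
  using Esub by (auto simp: out_nbhd_def)

lemma alive:
  assumes sp: "stoch_path M w (out_nbhd E) x X K" and mx: "maximal_path M w (out_nbhd E) X K"
    and x: "x \<in> {1..n}" and om: "\<omega> \<in> space M"
  shows "(\<forall>i<t. w i \<omega> \<in> Sp) \<Longrightarrow> enat t \<le> K \<omega> \<and> X t \<omega> \<in> {1..n}"
proof (induction t)
  case 0
  then show ?case using sp om x by (simp add: stoch_path_def zero_enat_def[symmetric])
next
  case (Suc t)
  then have IH: "enat t \<le> K \<omega>" "X t \<omega> \<in> {1..n}" by auto
  have ws: "w t \<omega> \<in> Sp" using Suc.prems by auto
  then have ne: "out_nbhd E (X t \<omega>) (w t \<omega>) \<noteq> {}" using Ene IH(2) by blast
  then have "K \<omega> \<noteq> enat t" using mx om unfolding maximal_path_def by blast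
  then have lt: "enat t < K \<omega>" using IH(1) by auto
  then have "X (Suc t) \<omega> \<in> out_nbhd E (X t \<omega>) (w t \<omega>)" using sp om unfolding stoch_path_def by blast
  then have "X (Suc t) \<omega> \<in> {1..n}" using nbhd_sub ws by blast
  then show ?case using lt by (simp add: Suc_ile_eq)
qed

abbreviation "V \<equiv> v_star n h Q E mu"
abbreviation "aug \<equiv> out_nbhd (aug_edges n Q E)"
definition "allowed i s = (if aug i s = {} then {1..n+2} else aug i s)"
definition "val k a = (\<Sum>j\<in>{1..n+2}. mdp_trans h mu j a * (mdp_reward n j + V k j))"

lemma V_Suc: "V (Suc k) x = Max (val k ` mdp_actions n h Q E x)"
  by (simp add: val_def)

lemma reward_eq: "mdp_reward n j = (if j = n + 1 then 1 else 0)"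
  by (simp add: mdp_reward_def)

lemma E_range: "s \<in> {1..h} \<Longrightarrow> (a, b) \<in> E s \<Longrightarrow> 1 \<le> a \<and> a \<le> n \<and> 1 \<le> b \<and> b \<le> n"
proof -
  assume "s \<in> {1..h}" "(a, b) \<in> E s"
  from \<open>s \<in> {1..h}\<close> have "E s \<subseteq> {1..n} \<times> {1..n}" by (rule bspec[OF Esub])
  then have "(a, b) \<in> {1..n} \<times> {1..n}" using \<open>(a, b) \<in> E s\<close> by (rule subsetD)
  then show ?thesis by simp
qed

lemma aug_sub: assumes "s \<in> {1..h}" shows "aug i s \<subseteq> {1..n+2}"
  by (auto simp: out_nbhd_def aug_edges_def dest!: E_range[OF assms])

lemma allowed_sub: "s \<in> {1..h} \<Longrightarrow> allowed i s \<subseteq> {1..n+2}"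
  using aug_sub by (auto simp: allowed_def)

lemma allowed_ne: "allowed i s \<noteq> {}"
  by (auto simp: allowed_def)

lemma actions_alt: "mdp_actions n h Q E i = {a. length a = h \<and> (\<forall>s\<in>{1..h}. a ! (s - 1) \<in> allowed i s)}"
  by (simp add: mdp_actions_def allowed_def)

lemma act_range: "a \<in> mdp_actions n h Q E i \<Longrightarrow> s \<in> {1..h} \<Longrightarrow> a ! (s - 1) \<in> {1..n+2}"
  using allowed_sub unfolding actions_alt by blast

lemma actions_finite: "finite (mdp_actions n h Q E i)"
proof (rule finite_subset[OF _ finite_lists_length_eq[of "{1..n+2}" h]])
  show "mdp_actions n h Q E i \<subseteq> {xs. set xs \<subseteq> {1..n+2} \<and> length xs = h}"
  proof (clarify, intro conjI)
    fix a assume a: "a \<in> mdp_actions n h Q E i"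
    show "length a = h" using a by (simp add: mdp_actions_def)
    show "set a \<subseteq> {1..n+2}"
    proof
      fix y assume "y \<in> set a"
      then obtain j where j: "j < length a" "y = a ! j" by (auto simp: in_set_conv_nth)
      then have "Suc j \<in> {1..h}" using a by (simp add: mdp_actions_def)
      from act_range[OF a this] show "y \<in> {1..n+2}" using j by simp
    qed
  qed
qed simp

lemma mk_action_nth: "s \<in> {1..h} \<Longrightarrow> map f [1..<Suc h] ! (s - 1) = f s"
  by (subst nth_map) (auto simp del: upt_Suc)

lemma mk_action: "(\<forall>s\<in>{1..h}. f s \<in> allowed i s) \<Longrightarrow> map f [1..<Suc h] \<in> mdp_actions n h Q E i"
  unfolding actions_alt
proof (intro CollectI conjI ballI)
  fix s assume "\<forall>s\<in>{1..h}. f s \<in> allowed i s" "s \<in> {1..h}"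
  then show "map f [1..<Suc h] ! (s - 1) \<in> allowed i s" by (simp only: mk_action_nth)
qed simp

lemma actions_ne: "mdp_actions n h Q E i \<noteq> {}"
proof -
  have "map (\<lambda>s. SOME z. z \<in> allowed i s) [1..<Suc h] \<in> mdp_actions n h Q E i"
    by (rule mk_action) (metis allowed_ne some_in_eq)
  then show ?thesis by blast
qed

lemma val_eq:
  assumes "\<forall>s\<in>{1..h}. a ! (s - 1) \<in> {1..n+2}"
  shows "val k a = (\<Sum>s\<in>{1..h}. mu s * (mdp_reward n (a ! (s - 1)) + V k (a ! (s - 1))))"
proof -
  let ?c = "\<lambda>j. mdp_reward n j + V k j"
  have "val k a = (\<Sum>j\<in>{1..n+2}. \<Sum>s\<in>{s\<in>{1..h}. a ! (s - 1) = j}. mu s * ?c (a ! (s - 1)))"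
    unfolding val_def mdp_trans_def sum_distrib_right
    by (intro sum.cong refl) auto
  also have "\<dots> = (\<Sum>s\<in>{1..h}. mu s * ?c (a ! (s - 1)))"
    by (rule sum.group) (use assms in auto)
  finally show ?thesis .
qed

lemma val_act: "a \<in> mdp_actions n h Q E i \<Longrightarrow>
   val k a = (\<Sum>s\<in>{1..h}. mu s * (mdp_reward n (a ! (s - 1)) + V k (a ! (s - 1))))"
  using act_range val_eq by blast

lemma aug_top: assumes "s \<in> {1..h}" shows "aug (n+1) s = {n+2} \<and> aug (n+2) s = {n+2}"
  by (auto simp: out_nbhd_def aug_edges_def dest!: E_range[OF assms])

lemma V_top: "V k (n+1) = 0 \<and> V k (n+2) = 0"
proof (induction k)
  case 0
  then show ?case by simp
next
  case (Suc k)
  have img: "val k ` mdp_actions n h Q E i = {0}" if i: "i = n+1 \<or> i = n+2" for i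
  proof -
    have "val k a = 0" if a: "a \<in> mdp_actions n h Q E i" for a
    proof -
      have *: "a ! (s - 1) = n + 2" if "s \<in> {1..h}" for s
      proof -
        have "a ! (s-1) \<in> allowed i s" using a that unfolding actions_alt by blast
        moreover have "aug i s = {n+2}" using aug_top[OF that] i by blast
        ultimately show ?thesis by (simp add: allowed_def)
      qed
      have "val k a = (\<Sum>s\<in>{1..h}. mu s * (mdp_reward n (a ! (s - 1)) + V k (a ! (s - 1))))"
        by (rule val_act[OF a])
      also have "\<dots> = (\<Sum>s\<in>{1..h}. mu s * (mdp_reward n (n+2) + V k (n+2)))"
        by (rule sum.cong) (simp_all only: *)
      also have "\<dots> = 0" using Suc.IH by (simp add: reward_eq)
      finally show ?thesis .
    qed
    note va = this
    obtain a0 where "a0 \<in> mdp_actions n h Q E i" using actions_ne[of i] by blast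
    then show ?thesis using va by force
  qed
  have "V (Suc k) (n+1) = 0" unfolding V_Suc img[OF disjI1[OF refl]] by simp
  moreover have "V (Suc k) (n+2) = 0" unfolding V_Suc img[OF disjI2[OF refl]] by simp
  ultimately show ?case by blast
qed

lemma V_Suc_ge: "a \<in> mdp_actions n h Q E x \<Longrightarrow> val k a \<le> V (Suc k) x"
  unfolding V_Suc by (rule Max_ge) (auto intro: actions_finite)

lemma V_Suc_attain: "\<exists>a\<in>mdp_actions n h Q E x. val k a = V (Suc k) x"
proof -
  have "V (Suc k) x \<in> val k ` mdp_actions n h Q E x"
    unfolding V_Suc by (rule Max_in) (auto simp: actions_finite actions_ne)
  then show ?thesis by auto
qed

lemma aug_of_E: "(x, j) \<in> E s \<Longrightarrow> (j \<in> Q \<longrightarrow> n+1 \<in> aug x s) \<and> (j \<notin> Q \<longrightarrow> j \<in> aug x s)"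
  by (auto simp: out_nbhd_def aug_edges_def)

lemma aug_cases: "x \<in> {1..n} \<Longrightarrow> c \<in> aug x s \<Longrightarrow>
   ((x, c) \<in> E s \<and> c \<notin> Q) \<or> (c = n+1 \<and> (\<exists>q\<in>Q. (x, q) \<in> E s))"
  by (auto simp: out_nbhd_def aug_edges_def)

definition "validG G = (\<forall>l s. s \<in> Sp \<longrightarrow> set l \<subseteq> Sp \<longrightarrow> G (l @ [s]) \<in> out_nbhd E (G l) s)"

lemma validD: "validG G \<Longrightarrow> s \<in> Sp \<Longrightarrow> set l \<subseteq> Sp \<Longrightarrow> G (l @ [s]) \<in> out_nbhd E (G l) s"
  unfolding validG_def by blast

lemma sum_split_Suc:
  "(\<Sum>ss\<in>Ls h (Suc k). if P ss then pp mu ss else 0) =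
   (\<Sum>s\<in>{1..h}. mu s * (\<Sum>ss\<in>Ls h k. if P (s # ss) then pp mu ss else 0))"
  unfolding sum_Ls_Suc sum_distrib_left by (intro sum.cong refl) (simp add: pp_def)

lemma upper_comb:
  "validG G \<Longrightarrow> (\<Sum>ss\<in>Ls h k. if hitG Q G k ss then pp mu ss else 0) \<le> V k (G [])"
proof (induction k arbitrary: G)
  case 0
  then show ?case by simp
next
  case (Suc k)
  define x where "x = G []"
  define f where "f s = (if mu s > 0 then (if G [s] \<in> Q then n + 1 else G [s]) else (SOME z. z \<in> allowed x s))" for s
  define a where "a = map f [1..<Suc h]"
  have Gs: "G [s] \<in> out_nbhd E x s" if "s \<in> Sp" for s
  proof -
    have "G ([] @ [s]) \<in> out_nbhd E (G []) s" by (rule validD[OF Suc.prems that]) simp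
    then show ?thesis by (simp add: x_def)
  qed
  have fa: "f s \<in> allowed x s" if "s \<in> {1..h}" for s
  proof (cases "mu s > 0")
    case True
    then have "(x, G [s]) \<in> E s" using Gs that by (simp add: out_nbhd_def)
    then have "f s \<in> aug x s" using aug_of_E True by (auto simp: f_def)
    then show ?thesis by (auto simp: allowed_def)
  next
    case False
    then show ?thesis unfolding f_def using allowed_ne by (simp add: some_in_eq)
  qed
  have a: "a \<in> mdp_actions n h Q E x" unfolding a_def by (rule mk_action) (use fa in blast)
  have trm: "mu s * (\<Sum>ss\<in>Ls h k. if hitG Q G (Suc k) (s # ss) then pp mu ss else 0)
      \<le> mu s * (mdp_reward n (a ! (s - 1)) + V k (a ! (s - 1)))" if s: "s \<in> {1..h}" for s
  proof (cases "mu s > 0")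
    case False
    then have "mu s = 0" using mu_nonneg[OF s] by simp
    then show ?thesis by simp
  next
    case True
    have as: "a ! (s - 1) = f s" unfolding a_def by (rule mk_action_nth[OF s])
    show ?thesis
    proof (cases "G [s] \<in> Q")
      case True
      then have "(\<Sum>ss\<in>Ls h k. if hitG Q G (Suc k) (s # ss) then pp mu ss else 0) = 1"
        using sum_pp by (simp add: hitG_Cons)
      moreover have "a ! (s - 1) = n + 1" using as True \<open>mu s > 0\<close> by (simp add: f_def)
      ultimately show ?thesis using V_top by (simp add: reward_eq)
    next
      case False
      have sSp: "s \<in> Sp" using s \<open>mu s > 0\<close> by simp
      have vG: "validG (\<lambda>l. G (s # l))"
        unfolding validG_def
      proof (intro allI impI)
        fix l s' assume "s' \<in> Sp" "set l \<subseteq> Sp"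
        then have "set (s # l) \<subseteq> Sp" using sSp by simp
        then have "G ((s # l) @ [s']) \<in> out_nbhd E (G (s # l)) s'"
          by (rule validD[OF Suc.prems \<open>s' \<in> Sp\<close>])
        then show "G (s # l @ [s']) \<in> out_nbhd E (G (s # l)) s'" by simp
      qed
      have "(\<Sum>ss\<in>Ls h k. if hitG Q G (Suc k) (s # ss) then pp mu ss else 0) =
            (\<Sum>ss\<in>Ls h k. if hitG Q (\<lambda>l. G (s # l)) k ss then pp mu ss else 0)"
        using False by (simp add: hitG_Cons)
      also have "\<dots> \<le> V k (G [s])" using Suc.IH[OF vG] by simp
      finally have le: "(\<Sum>ss\<in>Ls h k. if hitG Q G (Suc k) (s # ss) then pp mu ss else 0) \<le> V k (G [s])" .
      have "G [s] \<in> {1..n}" using Gs[OF sSp] nbhd_sub[OF s] by blast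
      then have "mdp_reward n (G [s]) = 0" by (simp add: reward_eq)
      moreover have "a ! (s - 1) = G [s]" using as False \<open>mu s > 0\<close> by (simp add: f_def)
      ultimately show ?thesis using le \<open>mu s > 0\<close> by simp
    qed
  qed
  have "(\<Sum>ss\<in>Ls h (Suc k). if hitG Q G (Suc k) ss then pp mu ss else 0) =
      (\<Sum>s\<in>{1..h}. mu s * (\<Sum>ss\<in>Ls h k. if hitG Q G (Suc k) (s # ss) then pp mu ss else 0))"
    by (rule sum_split_Suc)
  also have "\<dots> \<le> (\<Sum>s\<in>{1..h}. mu s * (mdp_reward n (a ! (s - 1)) + V k (a ! (s - 1))))"
    by (rule sum_mono) (rule trm)
  also have "\<dots> = val k a" by (rule val_act[OF a, symmetric])
  also have "\<dots> \<le> V (Suc k) x" by (rule V_Suc_ge[OF a])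
  finally show ?case unfolding x_def .
qed

definition "astar r y = (SOME a. a \<in> mdp_actions n h Q E y \<and> val r a = V (Suc r) y)"
definition "pol r y s = (let c = astar (r - 1) y ! (s - 1) in
   if c = n + 1 then (SOME q. q \<in> Q \<and> (y, q) \<in> E s) else c)"
definition "polv r y s = (if pol r y s \<in> out_nbhd E y s then pol r y s else (SOME z. z \<in> out_nbhd E y s))"

lemma astar: "astar r y \<in> mdp_actions n h Q E y \<and> val r (astar r y) = V (Suc r) y"
proof -
  have "\<exists>a. a \<in> mdp_actions n h Q E y \<and> val r a = V (Suc r) y" using V_Suc_attain[of y r] by blast
  then show ?thesis unfolding astar_def by (rule someI_ex)
qed

lemma polv_in: "out_nbhd E y s \<noteq> {} \<Longrightarrow> polv r y s \<in> out_nbhd E y s"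
  unfolding polv_def by (auto intro: someI)

lemma Ene': "y \<in> {1..n} \<Longrightarrow> s \<in> Sp \<Longrightarrow> out_nbhd E y s \<noteq> {}"
  using Ene by blast

lemma Gf_range: "y \<in> {1..n} \<Longrightarrow> set l \<subseteq> Sp \<Longrightarrow> Gf polv r y l \<in> {1..n}"
proof (induction l arbitrary: r y)
  case Nil
  then show ?case by simp
next
  case (Cons s l)
  then have "s \<in> Sp" by simp
  then have "polv r y s \<in> {1..n}" using polv_in[OF Ene'[OF Cons.prems(1)]] nbhd_sub by blast
  then show ?case using Cons by simp
qed

lemma lower_comb:
  "y \<in> {1..n} \<Longrightarrow> V k y \<le> (\<Sum>ss\<in>Ls h k. if hitG Q (Gf polv k y) k ss then pp mu ss else 0)"
proof (induction k arbitrary: y)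
  case 0
  then show ?case by simp
next
  case (Suc k)
  define a where "a = astar k y"
  have a: "a \<in> mdp_actions n h Q E y" and va: "val k a = V (Suc k) y"
    using astar unfolding a_def by auto
  have shift: "(\<lambda>l. Gf polv (Suc k) y (s # l)) = Gf polv k (polv (Suc k) y s)" for s
    by (simp add: fun_eq_iff)
  have trm: "mu s * (mdp_reward n (a ! (s - 1)) + V k (a ! (s - 1))) \<le>
      mu s * (\<Sum>ss\<in>Ls h k. if hitG Q (Gf polv (Suc k) y) (Suc k) (s # ss) then pp mu ss else 0)"
    if s: "s \<in> {1..h}" for s
  proof (cases "mu s > 0")
    case False
    then have "mu s = 0" using mu_nonneg[OF s] by simp
    then show ?thesis by simp
  next
    case True
    then have sSp: "s \<in> Sp" using s by simp
    have ne: "out_nbhd E y s \<noteq> {}" by (rule Ene'[OF Suc.prems sSp])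
    then obtain j where j: "(y, j) \<in> E s" by (auto simp: out_nbhd_def)
    have "aug y s \<noteq> {}" using aug_of_E[OF j] by blast
    moreover have "a ! (s - 1) \<in> allowed y s" using a s unfolding actions_alt by blast
    ultimately have as: "a ! (s - 1) \<in> aug y s" by (simp add: allowed_def)
    have ys: "Gf polv (Suc k) y [s] = polv (Suc k) y s" by simp
    have pol_eq: "pol (Suc k) y s = (if a ! (s - 1) = n + 1 then (SOME q. q \<in> Q \<and> (y, q) \<in> E s) else a ! (s - 1))"
      by (simp add: pol_def a_def Let_def)
    from aug_cases[OF Suc.prems as] show ?thesis
    proof
      assume c: "(y, a ! (s - 1)) \<in> E s \<and> a ! (s - 1) \<notin> Q"
      then have rng: "a ! (s - 1) \<in> {1..n}" using E_range[OF s conjunct1[OF c]] by simp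
      then have "pol (Suc k) y s = a ! (s - 1)" using pol_eq by simp
      then have pv: "polv (Suc k) y s = a ! (s - 1)" using c by (simp add: polv_def out_nbhd_def)
      have "(\<Sum>ss\<in>Ls h k. if hitG Q (Gf polv (Suc k) y) (Suc k) (s # ss) then pp mu ss else 0) =
            (\<Sum>ss\<in>Ls h k. if hitG Q (Gf polv k (a ! (s - 1))) k ss then pp mu ss else 0)"
        using c by (simp add: hitG_Cons shift pv ys del: Gf.simps)
      moreover have "V k (a ! (s - 1)) \<le> \<dots>" by (rule Suc.IH[OF rng])
      moreover have "mdp_reward n (a ! (s - 1)) = 0" using rng by (simp add: reward_eq)
      ultimately show ?thesis using True by simp
    next
      assume c: "a ! (s - 1) = n + 1 \<and> (\<exists>q\<in>Q. (y, q) \<in> E s)"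
      have ex: "\<exists>q. q \<in> Q \<and> (y, q) \<in> E s" using c by blast
      have "pol (Suc k) y s = (SOME q. q \<in> Q \<and> (y, q) \<in> E s)" using pol_eq c by simp
      then have "pol (Suc k) y s \<in> Q \<and> (y, pol (Suc k) y s) \<in> E s" using someI_ex[OF ex] by simp
      then have "polv (Suc k) y s \<in> Q" by (simp add: polv_def out_nbhd_def)
      then have "(\<Sum>ss\<in>Ls h k. if hitG Q (Gf polv (Suc k) y) (Suc k) (s # ss) then pp mu ss else 0) = 1"
        using sum_pp by (simp add: hitG_Cons)
      then show ?thesis using c V_top by (simp add: reward_eq)
    qed
  qed
  have "V (Suc k) y = val k a" using va by (rule sym)
  also have "\<dots> = (\<Sum>s\<in>{1..h}. mu s * (mdp_reward n (a ! (s - 1)) + V k (a ! (s - 1))))"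
    by (rule val_act[OF a])
  also have "\<dots> \<le> (\<Sum>s\<in>{1..h}. mu s * (\<Sum>ss\<in>Ls h k. if hitG Q (Gf polv (Suc k) y) (Suc k) (s # ss) then pp mu ss else 0))"
    by (rule sum_mono) (rule trm)
  also have "\<dots> = (\<Sum>ss\<in>Ls h (Suc k). if hitG Q (Gf polv (Suc k) y) (Suc k) ss then pp mu ss else 0)"
    by (rule sum_split_Suc[symmetric])
  finally show ?case .
qed

lemma pp_pos_Sp: "set ss \<subseteq> Sp \<Longrightarrow> pp mu ss \<noteq> 0"
  unfolding pp_def prod_list_zero_iff by auto

lemma Sp_Ls: "set ss \<subseteq> Sp \<Longrightarrow> ss \<in> Ls h (length ss)"
  unfolding Ls_def by auto

lemma upper:
  assumes sp: "stoch_path M w (out_nbhd E) x X K" and mx: "maximal_path M w (out_nbhd E) X K"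
    and x: "x \<in> {1..n}"
  shows "measure M {\<omega>\<in>space M. \<exists>t\<in>{1..k}. enat t \<le> K \<omega> \<and> X t \<omega> \<in> Q} \<le> V k x"
proof -
  define G where "G = (\<lambda>l. if l = [] then x else X (length l) (SOME \<omega>. \<omega> \<in> space M \<and> wsq w (length l) \<omega> = l))"
  have fac: "X t \<omega> = G (wsq w t \<omega>)" if "\<omega> \<in> space M" for t \<omega>
    unfolding G_def by (rule factor[OF sp that])
  have valid: "validG G"
    unfolding validG_def
  proof (intro allI impI)
    fix l s assume s: "s \<in> Sp" and l: "set l \<subseteq> Sp"
    define t where "t = length l"
    have ss: "set (l @ [s]) \<subseteq> Sp" using s l by simp
    have "prob {\<omega>\<in>space M. wsq w (Suc t) \<omega> = l @ [s]} = pp mu (l @ [s])"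
      using prob_single[OF Sp_Ls[OF ss]] by (simp add: t_def)
    then have "prob {\<omega>\<in>space M. wsq w (Suc t) \<omega> = l @ [s]} \<noteq> 0"
      using pp_pos_Sp[OF ss] by simp
    then have "{\<omega>\<in>space M. wsq w (Suc t) \<omega> = l @ [s]} \<noteq> {}"
      by (metis measure_empty)
    then obtain \<omega> where om: "\<omega> \<in> space M" and eq: "wsq w (Suc t) \<omega> = l @ [s]" by blast
    from eq have wl: "wsq w t \<omega> = l" and wt: "w t \<omega> = s" by (simp_all add: wsq_Suc)
    have "\<forall>i<t. w i \<omega> \<in> Sp"
    proof (intro allI impI)
      fix i assume it: "i < t"
      have "w i \<omega> = wsq w t \<omega> ! i" using nth_wsq[OF it] by (rule sym)
      also have "\<dots> = l ! i" by (simp only: wl)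
      finally have wi: "w i \<omega> = l ! i" .
      have "l ! i \<in> set l" using it unfolding t_def by (rule nth_mem)
      then have "l ! i \<in> Sp" using l by (rule rev_subsetD)
      then show "w i \<omega> \<in> Sp" by (simp only: wi)
    qed
    from alive[OF sp mx x om this] have al: "enat t \<le> K \<omega>" "X t \<omega> \<in> {1..n}" by auto
    have "out_nbhd E (X t \<omega>) (w t \<omega>) \<noteq> {}" using Ene'[OF al(2)] s wt by simp
    then have "K \<omega> \<noteq> enat t" using mx om unfolding maximal_path_def by blast
    then have "enat t < K \<omega>" using al(1) by auto
    then have "X (Suc t) \<omega> \<in> out_nbhd E (X t \<omega>) (w t \<omega>)" using sp om unfolding stoch_path_def by blast
    moreover have "X (Suc t) \<omega> = G (l @ [s])" using fac[OF om, of "Suc t"] unfolding eq .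
    moreover have "X t \<omega> = G l" using fac[OF om, of t] unfolding wl .
    ultimately show "G (l @ [s]) \<in> out_nbhd E (G l) s" using wt by simp
  qed
  have sub: "{\<omega>\<in>space M. \<exists>t\<in>{1..k}. enat t \<le> K \<omega> \<and> X t \<omega> \<in> Q} \<subseteq> {\<omega>\<in>space M. wsq w k \<omega> \<in> {ss. hitG Q G k ss}}"
  proof clarify
    fix \<omega> t assume om: "\<omega> \<in> space M" and t: "t \<in> {1..k}" and "X t \<omega> \<in> Q"
    have tk: "take t (wsq w k \<omega>) = wsq w t \<omega>" using t by (intro wsq_take) simp
    have "G (take t (wsq w k \<omega>)) \<in> Q" unfolding tk using fac[OF om, of t] \<open>X t \<omega> \<in> Q\<close> by simp
    then show "hitG Q G k (wsq w k \<omega>)" using t unfolding hitG_def by blast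
  qed
  have "measure M {\<omega>\<in>space M. \<exists>t\<in>{1..k}. enat t \<le> K \<omega> \<and> X t \<omega> \<in> Q}
      \<le> measure M {\<omega>\<in>space M. wsq w k \<omega> \<in> {ss. hitG Q G k ss}}"
    by (rule finite_measure_mono[OF sub]) (use prob_set in blast)
  also have "\<dots> = (\<Sum>ss\<in>Ls h k. if ss \<in> {ss. hitG Q G k ss} then pp mu ss else 0)"
    by (rule conjunct2[OF prob_set])
  also have "\<dots> = (\<Sum>ss\<in>Ls h k. if hitG Q G k ss then pp mu ss else 0)"
    by simp
  also have "\<dots> \<le> V k (G [])" by (rule upper_comb[OF valid])
  finally show ?thesis by (simp add: G_def)
qed

lemma lower:
  assumes x: "x \<in> {1..n}"
  shows "\<exists>X K. stoch_path M w (out_nbhd E) x X K \<and> maximal_path M w (out_nbhd E) X K \<and>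
     V k x \<le> measure M {\<omega>\<in>space M. \<exists>t\<in>{1..k}. enat t \<le> K \<omega> \<and> X t \<omega> \<in> Q}"
proof -
  define X where "X t \<omega> = Gf polv k x (wsq w t \<omega>)" for t \<omega>
  define P where "P \<omega> t = (out_nbhd E (X t \<omega>) (w t \<omega>) = {})" for \<omega> t
  define K where "K \<omega> = (if \<exists>t. P \<omega> t then enat (LEAST t. P \<omega> t) else \<infinity>)" for \<omega>
  have Kle: "enat t \<le> K \<omega> \<longleftrightarrow> (\<forall>t'<t. \<not> P \<omega> t')" for t \<omega>
    unfolding K_def by (rule enat_le_LeastK)
  have XS: "X (Suc t) \<omega> = polv (k - t) (X t \<omega>) (w t \<omega>)" for t \<omega>
    unfolding X_def wsq_Suc Gf_snoc by simp
  have sp: "stoch_path M w (out_nbhd E) x X K"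
    unfolding stoch_path_def
  proof (intro conjI ballI allI impI)
    fix \<omega> show "X 0 \<omega> = x" by (simp add: X_def wsq_def)
  next
    fix \<omega> t assume "enat t < K \<omega>"
    then have "enat (Suc t) \<le> K \<omega>" by (simp add: Suc_ile_eq)
    then have "\<not> P \<omega> t" using Kle by blast
    then show "X (Suc t) \<omega> \<in> out_nbhd E (X t \<omega>) (w t \<omega>)"
      unfolding XS P_def by (rule polv_in)
  next
    fix t
    have eq: "X (Suc t) = (\<lambda>l. Gf polv k x l) \<circ> (\<lambda>\<omega>. map (\<lambda>i. w i \<omega>) [0..<Suc t])"
      unfolding comp_def X_def wsq_def by (rule refl)
    show "X (Suc t) \<in> vimage_algebra (space M) (\<lambda>\<omega>. map (\<lambda>i. w i \<omega>) [0..<Suc t]) (count_space UNIV) \<rightarrow>\<^sub>M count_space UNIV"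
      unfolding eq by (rule measurable_comp[OF measurable_vimage_algebra1 measurable_count_space]) simp
  qed
  have mx: "maximal_path M w (out_nbhd E) X K"
    unfolding maximal_path_def
  proof (intro ballI allI impI)
    fix \<omega> t assume Kt: "K \<omega> = enat t"
    have ex: "\<exists>t. P \<omega> t"
    proof (rule ccontr)
      assume "\<not> (\<exists>t. P \<omega> t)"
      then have "K \<omega> = \<infinity>" unfolding K_def by (simp only: if_False)
      then show False using Kt by simp
    qed
    then have "K \<omega> = enat (LEAST t. P \<omega> t)" unfolding K_def by (simp only: if_True)
    then have "t = (LEAST t. P \<omega> t)" using Kt by simp
    then have "P \<omega> t" using LeastI_ex[OF ex] by (simp only:)
    then show "out_nbhd E (X t \<omega>) (w t \<omega>) = {}" by (simp add: P_def)
  qed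
  define B where "B = {ss. \<exists>t\<in>{1..k}. (\<forall>t'<t. out_nbhd E (Gf polv k x (take t' ss)) (ss ! t') \<noteq> {})
      \<and> Gf polv k x (take t ss) \<in> Q}"
  have ev: "{\<omega>\<in>space M. \<exists>t\<in>{1..k}. enat t \<le> K \<omega> \<and> X t \<omega> \<in> Q} = {\<omega>\<in>space M. wsq w k \<omega> \<in> B}"
  proof -
    have "(\<exists>t\<in>{1..k}. enat t \<le> K \<omega> \<and> X t \<omega> \<in> Q) \<longleftrightarrow> wsq w k \<omega> \<in> B" for \<omega>
    proof -
      have "(enat t \<le> K \<omega> \<and> X t \<omega> \<in> Q) \<longleftrightarrow>
         ((\<forall>t'<t. out_nbhd E (Gf polv k x (take t' (wsq w k \<omega>))) (wsq w k \<omega> ! t') \<noteq> {})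
            \<and> Gf polv k x (take t (wsq w k \<omega>)) \<in> Q)" if t: "t \<in> {1..k}" for t
      proof -
        have "(\<forall>t'<t. \<not> P \<omega> t') \<longleftrightarrow> (\<forall>t'<t. out_nbhd E (Gf polv k x (take t' (wsq w k \<omega>))) (wsq w k \<omega> ! t') \<noteq> {})"
        proof -
          have "\<not> P \<omega> t' \<longleftrightarrow> out_nbhd E (Gf polv k x (take t' (wsq w k \<omega>))) (wsq w k \<omega> ! t') \<noteq> {}" if "t' < t" for t'
            using that t by (simp add: P_def X_def wsq_take nth_wsq)
          then show ?thesis by blast
        qed
        moreover have "X t \<omega> = Gf polv k x (take t (wsq w k \<omega>))" using t by (simp add: X_def wsq_take)
        ultimately show ?thesis using Kle by simp
      qed
      then show ?thesis unfolding B_def by blast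
    qed
    then show ?thesis by blast
  qed
  have "V k x \<le> (\<Sum>ss\<in>Ls h k. if hitG Q (Gf polv k x) k ss then pp mu ss else 0)"
    by (rule lower_comb[OF x])
  also have "\<dots> \<le> (\<Sum>ss\<in>Ls h k. if ss \<in> B then pp mu ss else 0)"
  proof (rule sum_mono)
    fix ss assume ss: "ss \<in> Ls h k"
    show "(if hitG Q (Gf polv k x) k ss then pp mu ss else 0) \<le> (if ss \<in> B then pp mu ss else 0)"
    proof (cases "pp mu ss = 0")
      case True
      then show ?thesis by simp
    next
      case False
      have Sp: "set ss \<subseteq> Sp"
      proof
        fix s assume "s \<in> set ss"
        then have "mu s > 0" "s \<in> {1..h}" using pp_pos[OF ss False] Ls_mem[OF ss] by auto
        then show "s \<in> Sp" by simp
      qed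
      have len: "length ss = k" using ss by (simp add: Ls_def)
      have "ss \<in> B" if hit: "hitG Q (Gf polv k x) k ss"
      proof -
        obtain t where t: "t \<in> {1..k}" "Gf polv k x (take t ss) \<in> Q" using hit unfolding hitG_def by (elim bexE)
        have ne: "out_nbhd E (Gf polv k x (take t' ss)) (ss ! t') \<noteq> {}" if "t' < t" for t'
        proof (rule Ene')
          have "set (take t' ss) \<subseteq> Sp" using set_take_subset Sp by (rule subset_trans)
          then show "Gf polv k x (take t' ss) \<in> {1..n}" by (rule Gf_range[OF x])
          have "t' < length ss" using that t len by simp
          then have "ss ! t' \<in> set ss" by (rule nth_mem)
          then show "ss ! t' \<in> Sp" using Sp by (rule rev_subsetD)
        qed
        have "(\<forall>t'<t. out_nbhd E (Gf polv k x (take t' ss)) (ss ! t') \<noteq> {}) \<and> Gf polv k x (take t ss) \<in> Q"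
          using ne t(2) by simp
        then show ?thesis unfolding B_def mem_Collect_eq by (rule bexI[OF _ t(1)])
      qed
      then show ?thesis using pp_nonneg[OF ss] by (cases "hitG Q (Gf polv k x) k ss") simp_all
    qed
  qed
  also have "\<dots> = measure M {\<omega>\<in>space M. \<exists>t\<in>{1..k}. enat t \<le> K \<omega> \<and> X t \<omega> \<in> Q}"
    unfolding ev by (rule conjunct2[OF prob_set, symmetric])
  finally show ?thesis using sp mx by blast
qed

end

theorem proposition1:
  fixes M :: "'a measure" and w :: "nat \<Rightarrow> 'a \<Rightarrow> nat" and mu :: "nat \<Rightarrow> real"
    and n h :: nat and E :: "nat \<Rightarrow> (nat \<times> nat) set" and Q :: "nat set"
  assumes "prob_space M"
    and "\<forall>i. w i \<in> measurable M (count_space UNIV)"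
    and "\<forall>i. \<forall>\<omega>\<in>space M. w i \<omega> \<in> {1..h}"
    and "prob_space.indep_vars M (\<lambda>_. count_space UNIV) w UNIV"
    and "\<forall>i. \<forall>s\<in>{1..h}. measure M {\<omega>\<in>space M. w i \<omega> = s} = mu s"
    and "\<forall>s\<in>{1..h}. E s \<subseteq> {1..n} \<times> {1..n}"
    and "\<not> (\<exists>i\<in>{1..n}. \<exists>s\<in>{1..h}. mu s > 0 \<and> out_nbhd E i s = {})"
    and "Q \<subseteq> {1..n}"
  shows "\<forall>k. \<forall>x\<in>{1..n}. weak_reach M w (out_nbhd E) Q k x = v_star n h Q E mu k x"
proof -
  interpret sdg M w mu n h E Q
    by (rule sdg.intro[OF assms(1) sdg_axioms.intro[OF assms(2-8)]])
  show ?thesis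
  proof (intro allI ballI)
    fix k x assume x: "x \<in> {1..n}"
    obtain X0 K0 where XK: "stoch_path M w (out_nbhd E) x X0 K0" "maximal_path M w (out_nbhd E) X0 K0"
      "V k x \<le> measure M {\<omega>\<in>space M. \<exists>t\<in>{1..k}. enat t \<le> K0 \<omega> \<and> X0 t \<omega> \<in> Q}"
      using lower[OF x] by blast
    have eq: "V k x = measure M {\<omega>\<in>space M. \<exists>t\<in>{1..k}. enat t \<le> K0 \<omega> \<and> X0 t \<omega> \<in> Q}"
      using XK(3) upper[OF XK(1) XK(2) x, of k] by linarith
    show "weak_reach M w (out_nbhd E) Q k x = V k x"
      unfolding weak_reach_def
    proof (rule cSup_eq_maximum)
      show "V k x \<in> {measure M {\<omega>\<in>space M. \<exists>t\<in>{1..k}. enat t \<le> K \<omega> \<and> X t \<omega> \<in> Q} | X K.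
            stoch_path M w (out_nbhd E) x X K \<and> maximal_path M w (out_nbhd E) X K}"
        using eq XK(1,2) by blast
    next
      fix y assume "y \<in> {measure M {\<omega>\<in>space M. \<exists>t\<in>{1..k}. enat t \<le> K \<omega> \<and> X t \<omega> \<in> Q} | X K.
            stoch_path M w (out_nbhd E) x X K \<and> maximal_path M w (out_nbhd E) X K}"
      then obtain X K where y: "y = measure M {\<omega>\<in>space M. \<exists>t\<in>{1..k}. enat t \<le> K \<omega> \<and> X t \<omega> \<in> Q}"
        and p: "stoch_path M w (out_nbhd E) x X K" "maximal_path M w (out_nbhd E) X K" by blast
      show "y \<le> V k x" unfolding y by (rule upper[OF p x])
    qed
  qed
qed


end
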